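(* Let $G=(P,E)$ be a finite, connected, undirected, simple graph on the vertex set $P=\{1,\dots,n\}$ with $n\ge 2$, and let $W$ be a finite totally ordered set of $p$ words. Consider the automata network with confusion parameter $\epsilon=0$ described in the context, started from any initial configuration of the form $(M_u,x_u)=(\{x_u\},x_u)$ with $x_u\in W$ for every $u\in P$, and run under the fully-asynchronous updating scheme. Then the expected number of time steps until the system reaches a fixed point is $\mathcal{O}(n^2p\log n)$. That is, there is an absolute constant $C$ such that for every such $G$, $W$ and initial configuration, this expected number is at most $Cn^2p\log n$.
   Context: Model. Each vertex $u\in P$ (an individual) has a state $(M_u,x_u)$, where the memory $M_u$ is a subset of $W$ and $x_u\in M_u$ is the word $u$ conveys to its neighbours. The neighbourhood of $u$ is $V_u=\{v\in P:(u,v)\in E\}$. The total order on $W$ is written $\prec$, and $\min$ refers to it. Local rule of $u$ for confusion parameter $\epsilon=0$. When $u$ is updated, it first forms $N_u=\{x_v : v\in V_u,\ x_v\notin M_u\}$ and $B_u=\{x_v : v\in V_u,\ x_v\in M_u\}$. If $N_u\neq\emptyset$, the memory becomes $M_u\cup N_u$ and $x_u$ is unchanged (addition). Otherwise the state becomes $(\{\min B_u\},\min B_u)$ (collapse). All other vertices keep their states. Updating schemes. One vertex is updated per time step. Under the sequential scheme, a fixed permutation $\sigma$ of $P$ is chosen and vertices are updated cyclically in the order $\sigma(1),\dots,\sigma(n),\sigma(1),\dots$, with each update using the current states. Under the fully-asynchronous scheme, at each time step one vertex is chosen uniformly at random from $P$, independently of all other steps. A fixed point is a configuration that is left unchanged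 by the local rule of every vertex. *)

theory Defs
  imports "HOL-Probability.Probability"
begin

text \<open>Vertices are natural numbers, words are natural numbers (the total order on W
  is the order of nat restricted to W). A configuration assigns to every vertex u a
  pair (M_u, x_u).\<close>

type_synonym config = "nat \<Rightarrow> nat set \<times> nat"

definition simple_connected_graph :: "nat set \<Rightarrow> (nat \<times> nat) set \<Rightarrow> bool" where
  "simple_connected_graph P E \<longleftrightarrow>
     E \<subseteq> P \<times> P \<and> sym E \<and> irrefl E \<and> (\<forall>u\<in>P. \<forall>v\<in>P. (u, v) \<in> E\<^sup>*)"

definition nbhd :: "(nat \<times> nat) set \<Rightarrow> nat \<Rightarrow> nat set" where
  "nbhd E u = {v. (u, v) \<in> E}"

definition local_rule :: "(nat \<times> nat) set \<Rightarrow> config \<Rightarrow> nat \<Rightarrow> nat set \<times> nat" where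
  "local_rule E c u =
     (let Mu = fst (c u); xu = snd (c u);
          N = {snd (c v) | v. v \<in> nbhd E u \<and> snd (c v) \<notin> Mu};
          B = {snd (c v) | v. v \<in> nbhd E u \<and> snd (c v) \<in> Mu}
      in if N \<noteq> {} then (Mu \<union> N, xu) else ({Min B}, Min B))"

definition update :: "(nat \<times> nat) set \<Rightarrow> nat \<Rightarrow> config \<Rightarrow> config" where
  "update E u c = c(u := local_rule E c u)"

definition fixed_point :: "nat set \<Rightarrow> (nat \<times> nat) set \<Rightarrow> config \<Rightarrow> bool" where
  "fixed_point P E c \<longleftrightarrow> (\<forall>u\<in>P. update E u c = c)"

fun run :: "(nat \<times> nat) set \<Rightarrow> config \<Rightarrow> (nat \<Rightarrow> nat) \<Rightarrow> nat \<Rightarrow> config" where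
  "run E c0 \<omega> 0 = c0"
| "run E c0 \<omega> (Suc t) = update E (\<omega> t) (run E c0 \<omega> t)"

definition hit_time :: "nat set \<Rightarrow> (nat \<times> nat) set \<Rightarrow> config \<Rightarrow> (nat \<Rightarrow> nat) \<Rightarrow> enat" where
  "hit_time P E c0 \<omega> =
     (if \<exists>t. fixed_point P E (run E c0 \<omega> t)
      then enat (LEAST t. fixed_point P E (run E c0 \<omega> t)) else \<infinity>)"

text \<open>Fully asynchronous scheme: the updated vertices form an i.i.d. sequence,
  each uniform on P.\<close>
definition async_space :: "nat set \<Rightarrow> (nat \<Rightarrow> nat) measure" where
  "async_space P = PiM UNIV (\<lambda>_::nat. measure_pmf (pmf_of_set P))"

definition expected_hit_time :: "nat set \<Rightarrow> (nat \<times> nat) set \<Rightarrow> config \<Rightarrow> ennreal" where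
  "expected_hit_time P E c0 =
     (\<integral>\<^sup>+ \<omega>. ennreal_of_enat (hit_time P E c0 \<omega>) \<partial>async_space P)"

end

theory Submission
  imports Defs
begin


fun badl :: "nat set \<Rightarrow> (nat \<times> nat) set \<Rightarrow> config \<Rightarrow> nat list \<Rightarrow> bool" where
  "badl P E s [] = (\<not> fixed_point P E s)"
| "badl P E s (x # l) = (\<not> fixed_point P E s \<and> badl P E (update E x s) l)"

lemma run_shift: "run E s \<omega> (Suc t) = run E (update E (\<omega> 0) s) (\<lambda>i. \<omega> (Suc i)) t"
  by (induction t) auto

lemma badl_stake: "badl P E s (stake t xs) \<longleftrightarrow> (\<forall>t'\<le>t. \<not> fixed_point P E (run E s (snth xs) t'))"
proof (induction t arbitrary: s xs)
  case 0 then show ?case by simp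
next
  case (Suc t)
  have "(\<forall>t'\<le>Suc t. \<not> fixed_point P E (run E s (snth xs) t')) \<longleftrightarrow>
     \<not> fixed_point P E s \<and> (\<forall>t'\<le>t. \<not> fixed_point P E (run E s (snth xs) (Suc t')))"
    apply safe
      apply (metis le0 run.simps(1))
     apply (metis Suc_le_mono)
    by (metis Suc_le_mono not0_implies_Suc run.simps(1))
  also have "(\<lambda>t'. run E s (snth xs) (Suc t')) = (\<lambda>t'. run E (update E (shd xs) s) (snth (stl xs)) t')"
    by (rule ext, subst run_shift) simp
  finally show ?case using Suc by (simp add: stake.simps)
qed

lemma to_stream_snth: "snth (to_stream X) = X"
  by (rule ext) (simp add: to_stream_def)

lemma enat_tail_sum:
  fixes Q :: "nat \<Rightarrow> bool"
  assumes mono: "\<And>t. Q (Suc t) \<Longrightarrow> Q t"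
  shows "ennreal_of_enat (if \<exists>t. \<not> Q t then enat (LEAST t. \<not> Q t) else \<infinity>) = (\<Sum>t. of_bool (Q t))"
proof (cases "\<exists>t. \<not> Q t")
  case True
  define k where "k = (LEAST t. \<not> Q t)"
  have nk: "\<not> Q k" unfolding k_def using True by (metis LeastI)
  have Qlt: "Q t" if "t < k" for t using that unfolding k_def using not_less_Least by blast
  have Qge: "\<not> Q t" if "t \<ge> k" for t using that
  proof (induction t rule: dec_induct)
    case base then show ?case using nk .
  next
    case (step t) then show ?case using mono by blast
  qed
  have "(\<Sum>t. of_bool (Q t) :: ennreal) = (\<Sum>t<k. of_bool (Q t))"
    by (rule suminf_finite) (auto simp: Qge)
  also have "\<dots> = (\<Sum>t<k. 1)" by (rule sum.cong) (auto simp: Qlt)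
  finally show ?thesis using True k_def by simp
next
  case False
  then have "(\<Sum>t. of_bool (Q t) :: ennreal) = (\<Sum>t. 1)" by simp
  also have "\<dots> = \<infinity>" proof -
    have "(SUP n. of_nat n) \<le> (\<Sum>t. 1::ennreal)"
    proof (rule SUP_least)
      fix n :: nat
      have "(\<Sum>t<n. 1::ennreal) \<le> (\<Sum>t. 1)" by (rule sum_le_suminf) (auto intro: summableI)
      then show "of_nat n \<le> (\<Sum>t. 1::ennreal)" by simp
    qed
    then have "top \<le> (\<Sum>t. 1::ennreal)" by (simp only: ennreal_SUP_of_nat_eq_top)
    then show ?thesis by (simp add: top_unique)
  qed
  finally show ?thesis using False by simp
qed

lemma tail_sum2:
  fixes F :: "nat \<Rightarrow> bool"
  shows "ennreal_of_enat (if \<exists>t. F t then enat (LEAST t. F t) else \<infinity>) = (\<Sum>t. of_bool (\<forall>t'\<le>t. \<not> F t'))"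
proof -
  have "(\<exists>t. F t) = (\<exists>t. \<not> (\<forall>t'\<le>t. \<not> F t'))" by auto
  moreover have "(LEAST t. F t) = (LEAST t. \<not> (\<forall>t'\<le>t. \<not> F t'))" if ex: "\<exists>t. F t"
  proof -
    obtain k where k: "F k" using ex by blast
    define m where "m = (LEAST t. F t)"
    have Fm: "F m" unfolding m_def using k by (metis LeastI)
    have lt: "\<not> F t" if "t < m" for t using that unfolding m_def using not_less_Least by blast
    show ?thesis unfolding m_def[symmetric]
      by (rule Least_equality[symmetric]) (use Fm lt in \<open>auto, meson le_trans not_le\<close>)
  qed
  ultimately show ?thesis using enat_tail_sum[of "\<lambda>t. \<forall>t'\<le>t. \<not> F t'"]
    by (cases "\<exists>t. F t") (simp_all only: if_True if_False, auto)
qed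

lemma expected_bound:
  fixes P :: "nat set" and E and c0 :: config and Inv :: "config \<Rightarrow> bool" and Psi :: "config \<Rightarrow> real"
  assumes fin: "finite P" and ne: "P \<noteq> {}"
   and inv0: "Inv c0"
   and invu: "\<And>s u. Inv s \<Longrightarrow> u \<in> P \<Longrightarrow> Inv (update E u s)"
   and nonneg: "\<And>s. Inv s \<Longrightarrow> 0 \<le> Psi s"
   and drift: "\<And>s. Inv s \<Longrightarrow> \<not> fixed_point P E s \<Longrightarrow>
        real (card P) + (\<Sum>u\<in>P. Psi (update E u s)) \<le> real (card P) * Psi s"
  shows "expected_hit_time P E c0 \<le> ennreal (Psi c0)"
proof -
  define M where "M = measure_pmf (pmf_of_set P)"
  define S where "S = stream_space M"
  interpret prob_space M unfolding M_def by (rule prob_space_measure_pmf)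
  have stake_meas: "stake t \<in> measurable S (count_space UNIV)" for t
  proof -
    have ss: "sets S = sets (stream_space (count_space UNIV))" unfolding S_def M_def
      by (rule sets_stream_space_cong) simp
    show ?thesis by (subst measurable_cong_sets[OF ss refl]) (rule measurable_stake)
  qed
  have meas: "(\<lambda>xs. of_bool (badl P E s (stake t xs)) :: ennreal) \<in> borel_measurable S" for s t
    by (rule measurable_compose[OF stake_meas]) simp
  define Q where "Q s t = (\<integral>\<^sup>+xs. of_bool (badl P E s (stake t xs)) \<partial>S)" for s t
  define g where "g s xs = (\<Sum>t. of_bool (badl P E s (stake t xs)) :: ennreal)" for s xs
  have gmeas: "g s \<in> borel_measurable S" for s
    unfolding g_def by (rule borel_measurable_suminf_order) (rule meas)
  have "expected_hit_time P E c0 = (\<integral>\<^sup>+\<omega>. g c0 (to_stream \<omega>) \<partial>(\<Pi>\<^sub>M i\<in>UNIV. M))"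
    unfolding expected_hit_time_def async_space_def M_def[symmetric]
  proof (rule nn_integral_cong)
    fix \<omega> :: "nat \<Rightarrow> nat"
    show "ennreal_of_enat (hit_time P E c0 \<omega>) = g c0 (to_stream \<omega>)"
      unfolding hit_time_def g_def badl_stake to_stream_snth by (rule tail_sum2)
  qed
  also have "\<dots> = (\<integral>\<^sup>+xs. g c0 xs \<partial>S)"
  proof -
    have "(\<integral>\<^sup>+xs. g c0 xs \<partial>S) = (\<integral>\<^sup>+xs. g c0 xs \<partial>distr (\<Pi>\<^sub>M i\<in>UNIV. M) S to_stream)"
      unfolding S_def using stream_space_eq_distr[of M] by simp
    also have "\<dots> = (\<integral>\<^sup>+\<omega>. g c0 (to_stream \<omega>) \<partial>(\<Pi>\<^sub>M i\<in>UNIV. M))"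
      by (rule nn_integral_distr) (simp_all add: S_def gmeas[unfolded S_def])
    finally show ?thesis by simp
  qed
  also have "\<dots> = (\<Sum>t. Q c0 t)"
    unfolding g_def Q_def by (rule nn_integral_suminf[OF meas])
  finally have eq: "expected_hit_time P E c0 = (\<Sum>t. Q c0 t)" .
  have Q0: "Q s 0 = of_bool (\<not> fixed_point P E s)" for s
    unfolding Q_def S_def by (simp add: prob_space.emeasure_space_1[OF prob_space_stream_space] )
  have QS: "Q s (Suc t) = of_bool (\<not> fixed_point P E s) * ((\<Sum>u\<in>P. Q (update E u s) t) / card P)" for s t
  proof -
    have "Q s (Suc t) = (\<integral>\<^sup>+x. (\<integral>\<^sup>+X. of_bool (badl P E s (stake (Suc t) (x ## X))) \<partial>S) \<partial>M)"
      unfolding Q_def S_def by (rule nn_integral_stream_space) (rule meas[unfolded S_def])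
    also have "\<dots> = (\<integral>\<^sup>+x. of_bool (\<not> fixed_point P E s) * Q (update E x s) t \<partial>M)"
      unfolding Q_def by (auto intro!: nn_integral_cong simp: nn_integral_cmult[OF meas] )
    also have "\<dots> = of_bool (\<not> fixed_point P E s) * ((\<Sum>u\<in>P. Q (update E u s) t) / card P)"
      unfolding M_def using fin ne
      by (simp add: nn_integral_pmf_of_set sum_distrib_left[symmetric] ennreal_times_divide)
    finally show ?thesis .
  qed
  have part: "\<forall>s. Inv s \<longrightarrow> (\<Sum>t<T. Q s t) \<le> ennreal (Psi s)" for T
  proof (induction T)
    case 0 then show ?case by simp
  next
    case (Suc T)
    show ?case
    proof (intro allI impI)
      fix s assume Is: "Inv s"
      show "(\<Sum>t<Suc T. Q s t) \<le> ennreal (Psi s)"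
      proof (cases "fixed_point P E s")
        case True
        have "Q s t = 0" for t using True by (cases t) (simp_all add: Q0 QS)
        then show ?thesis by simp
      next
        case False
        have "(\<Sum>t<Suc T. Q s t) = Q s 0 + (\<Sum>t<T. Q s (Suc t))"
          by (rule sum.lessThan_Suc_shift)
        also have "\<dots> = 1 + (\<Sum>t<T. (\<Sum>u\<in>P. Q (update E u s) t) / card P)"
          using False by (simp add: Q0 QS)
        also have "\<dots> = 1 + (\<Sum>u\<in>P. \<Sum>t<T. Q (update E u s) t) / card P"
          by (simp add: divide_ennreal_def sum_distrib_right[symmetric] sum.swap[of _ P])
        also have "\<dots> \<le> 1 + (\<Sum>u\<in>P. ennreal (Psi (update E u s))) / card P"
          using Suc Is invu
          by (intro add_left_mono divide_right_mono_ennreal sum_mono) auto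
        also have "\<dots> = ennreal (1 + (\<Sum>u\<in>P. Psi (update E u s)) / card P)"
        proof -
          have a0: "0 \<le> (\<Sum>u\<in>P. Psi (update E u s))" using nonneg invu Is by (simp add: sum_nonneg)
          have cp: "0 < real (card P)" using fin ne by (simp add: card_gt_0_iff)
          have "(\<Sum>u\<in>P. ennreal (Psi (update E u s))) = ennreal (\<Sum>u\<in>P. Psi (update E u s))"
            using nonneg invu Is by (simp add: sum_ennreal)
          moreover have "ennreal (\<Sum>u\<in>P. Psi (update E u s)) / of_nat (card P) = ennreal ((\<Sum>u\<in>P. Psi (update E u s)) / real (card P))"
            using a0 cp by (simp add: ennreal_of_nat_eq_real_of_nat divide_ennreal)
          moreover have "ennreal (1 + (\<Sum>u\<in>P. Psi (update E u s)) / real (card P)) = 1 + ennreal ((\<Sum>u\<in>P. Psi (update E u s)) / real (card P))"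
            using a0 cp by (simp add: ennreal_plus)
          ultimately show ?thesis by simp
        qed
        also have "\<dots> \<le> ennreal (Psi s)"
        proof (rule ennreal_leI)
          have cp: "real (card P) > 0" using fin ne by (simp add: card_gt_0_iff)
          have "1 + (\<Sum>u\<in>P. Psi (update E u s)) / real (card P) = (real (card P) + (\<Sum>u\<in>P. Psi (update E u s))) / real (card P)"
            using cp by (simp add: field_simps)
          also have "\<dots> \<le> Psi s" using drift[OF Is False] cp by (simp add: pos_divide_le_eq mult.commute)
          finally show "1 + (\<Sum>u\<in>P. Psi (update E u s)) / real (card P) \<le> Psi s" .
        qed
        finally show ?thesis .
      qed
    qed
  qed
  have "(\<Sum>t. Q c0 t) \<le> ennreal (Psi c0)"
    by (rule suminf_le_const) (auto intro: summableI part[rule_format, OF inv0])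
  then show ?thesis using eq by simp
qed



lemma local_rule_eq:
  "local_rule E c u =
    (let nw = (\<lambda>v. snd (c v)) ` nbhd E u in
     if nw \<subseteq> fst (c u) then ({Min nw}, Min nw) else (fst (c u) \<union> nw, snd (c u)))"
proof -
  define nw where "nw = (\<lambda>v. snd (c v)) ` nbhd E u"
  have N: "{snd (c v) | v. v \<in> nbhd E u \<and> snd (c v) \<notin> fst (c u)} = nw - fst (c u)"
    unfolding nw_def by auto
  have B: "{snd (c v) | v. v \<in> nbhd E u \<and> snd (c v) \<in> fst (c u)} = nw \<inter> fst (c u)"
    unfolding nw_def by auto
  have L: "local_rule E c u = (if nw - fst (c u) \<noteq> {} then (fst (c u) \<union> (nw - fst (c u)), snd (c u))
       else ({Min (nw \<inter> fst (c u))}, Min (nw \<inter> fst (c u))))"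
    unfolding local_rule_def Let_def N B by simp
  have R: "(if nw - fst (c u) \<noteq> {} then (fst (c u) \<union> (nw - fst (c u)), snd (c u))
       else ({Min (nw \<inter> fst (c u))}, Min (nw \<inter> fst (c u)))) =
      (if nw \<subseteq> fst (c u) then ({Min nw}, Min nw) else (fst (c u) \<union> nw, snd (c u)))"
  proof (cases "nw \<subseteq> fst (c u)")
    case True
    then have "nw - fst (c u) = {}" "nw \<inter> fst (c u) = nw" by auto
    then show ?thesis using True by simp
  next
    case False
    then have "nw - fst (c u) \<noteq> {}" "fst (c u) \<union> (nw - fst (c u)) = fst (c u) \<union> nw" by auto
    then show ?thesis using False by simp
  qed
  show ?thesis using L R by (simp only: nw_def Let_def)
qed

locale net =
  fixes P :: "nat set" and E :: "(nat \<times> nat) set" and W0 :: "nat set"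
  assumes finP: "finite P" and twoP: "card P \<ge> 2" and EP: "E \<subseteq> P \<times> P"
    and symE: "sym E" and irrE: "irrefl E" and conn: "\<forall>u\<in>P. \<forall>v\<in>P. (u, v) \<in> E\<^sup>*"
    and finW: "finite W0"
begin

definition Inv :: "config \<Rightarrow> bool" where
  "Inv s \<longleftrightarrow> (\<forall>u\<in>P. snd (s u) \<in> fst (s u) \<and> fst (s u) \<subseteq> W0)"

definition nw :: "config \<Rightarrow> nat \<Rightarrow> nat set" where
  "nw s u = (\<lambda>v. snd (s v)) ` nbhd E u"

lemma update_eq: "update E u s = s(u := (if nw s u \<subseteq> fst (s u) then ({Min (nw s u)}, Min (nw s u))
     else (fst (s u) \<union> nw s u, snd (s u))))"
  unfolding update_def local_rule_eq nw_def Let_def by simp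

lemma nbhd_sub: "nbhd E u \<subseteq> P" using EP by (auto simp: nbhd_def)
lemma nbhd_fin: "finite (nbhd E u)" using nbhd_sub finP finite_subset by blast
lemma nbhd_irr: "u \<notin> nbhd E u" using irrE by (auto simp: nbhd_def irrefl_def)
lemma nbhd_sym: "v \<in> nbhd E u \<longleftrightarrow> u \<in> nbhd E v" using symE by (auto simp: nbhd_def sym_def)

lemma cross_edge:
  assumes "A \<subseteq> P" "a \<in> A" "b \<in> P" "b \<notin> A"
  shows "\<exists>x\<in>A. \<exists>y\<in>P - A. (x, y) \<in> E"
proof -
  have "(a, b) \<in> E\<^sup>*" using conn assms by auto
  then have "b \<in> A \<or> (\<exists>x\<in>A. \<exists>y\<in>P - A. (x, y) \<in> E)"
  proof (induction rule: rtrancl_induct)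
    case base then show ?case using assms by simp
  next
    case (step y z)
    have zP: "z \<in> P" using step.hyps(2) EP by auto
    show ?case
    proof (cases "y \<in> A")
      case True
      then show ?thesis using zP step.hyps(2) by (cases "z \<in> A") auto
    next
      case False
      then show ?thesis using step.IH by simp
    qed
  qed
  then show ?thesis using assms by blast
qed

lemma nbhd_ne: assumes "u \<in> P" shows "nbhd E u \<noteq> {}"
proof -
  have "P - {u} \<noteq> {}"
  proof
    assume "P - {u} = {}"
    then have "P \<subseteq> {u}" by blast
    then have "card P \<le> 1" using card_mono[of "{u}" P] by simp
    then show False using twoP by simp
  qed
  then obtain b where "b \<in> P" "b \<noteq> u" by blast
  then obtain x y where "x \<in> {u}" "y \<in> P - {u}" "(x, y) \<in> E" using cross_edge[of "{u}" u b] assms by auto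
  then show ?thesis by (auto simp: nbhd_def)
qed

lemma nw_fin: "finite (nw s u)" unfolding nw_def using nbhd_fin by simp
lemma nw_ne: "u \<in> P \<Longrightarrow> nw s u \<noteq> {}" unfolding nw_def using nbhd_ne by simp

lemma Inv_update: assumes "Inv s" "u \<in> P" shows "Inv (update E u s)"
proof -
  have "nw s u \<subseteq> W0" using assms nbhd_sub unfolding Inv_def nw_def by auto
  moreover have "Min (nw s u) \<in> nw s u" using nw_fin nw_ne[OF assms(2)] by simp
  ultimately show ?thesis using assms unfolding Inv_def update_eq by (simp add: subset_iff)
qed


lemma P_ne: "P \<noteq> {}" using twoP by auto

definition mn :: "config \<Rightarrow> nat" where "mn s = Min ((\<lambda>v. snd (s v)) ` P)"

lemma mn_le: "v \<in> P \<Longrightarrow> mn s \<le> snd (s v)"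
  unfolding mn_def using finP by simp

lemma mn_in: "\<exists>v\<in>P. snd (s v) = mn s"
proof -
  have "mn s \<in> (\<lambda>v. snd (s v)) ` P" unfolding mn_def using finP P_ne by (intro Min_in) auto
  then show ?thesis by auto
qed

lemma upd_other: "v \<noteq> u \<Longrightarrow> update E u s v = s v"
  unfolding update_def by simp

lemma upd_u: "update E u s u = (if nw s u \<subseteq> fst (s u) then ({Min (nw s u)}, Min (nw s u))
     else (fst (s u) \<union> nw s u, snd (s u)))"
  unfolding update_eq by simp

lemma Min_nw_in: "u \<in> P \<Longrightarrow> Min (nw s u) \<in> nw s u"
  using nw_fin nw_ne by simp

lemma nw_words: "u \<in> P \<Longrightarrow> w \<in> nw s u \<Longrightarrow> \<exists>v\<in>nbhd E u. v \<in> P \<and> w = snd (s v)"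
  unfolding nw_def using nbhd_sub by auto

lemma word_old: assumes "u \<in> P" "v \<in> P" shows "\<exists>z\<in>P. snd (update E u s v) = snd (s z)"
proof (cases "v = u")
  case True
  show ?thesis
  proof (cases "nw s u \<subseteq> fst (s u)")
    case True
    then have "snd (update E u s v) = Min (nw s u)" using \<open>v = u\<close> by (simp add: upd_u)
    then show ?thesis using nw_words[OF assms(1) Min_nw_in[OF assms(1)]] by auto
  next
    case False
    then show ?thesis using \<open>v = u\<close> assms by (auto simp: upd_u)
  qed
next
  case False
  then show ?thesis using assms by (auto simp: upd_other)
qed

lemma mn_mono: assumes "u \<in> P" shows "mn s \<le> mn (update E u s)"
proof -
  obtain v where v: "v \<in> P" "snd (update E u s v) = mn (update E u s)" using mn_in by blast
  obtain z where "z \<in> P" "snd (update E u s v) = snd (s z)" using word_old[OF assms v(1)] by blast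
  then show ?thesis using v mn_le by metis
qed

lemma mn_keep: assumes "u \<in> P" "v \<in> P" "snd (update E u s v) = mn s"
  shows "mn (update E u s) = mn s"
  using mn_mono[OF assms(1), of s] mn_le[OF assms(2), of "update E u s"] assms(3) by simp

lemma Min_nw_ge: assumes "u \<in> P" shows "mn s \<le> Min (nw s u)"
  using nw_words[OF assms Min_nw_in[OF assms, of s]] mn_le[of _ s] by auto

lemma collapse_min: assumes "u \<in> P" "nw s u \<subseteq> fst (s u)" "v \<in> nbhd E u" "snd (s v) = mn s"
  shows "snd (update E u s u) = mn s"
proof -
  have "snd (s v) \<in> nw s u" using assms(3) by (simp add: nw_def)
  then have "Min (nw s u) \<le> mn s" using assms(4) nw_fin by (metis Min_le)
  then show ?thesis using Min_nw_ge[OF assms(1), of s] assms(2) by (simp add: upd_u)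
qed

lemma keep_m: assumes "u \<in> P" "snd (s u) = mn s" "v \<in> nbhd E u" "snd (s v) = mn s"
  shows "snd (update E u s u) = mn s"
proof (cases "nw s u \<subseteq> fst (s u)")
  case True then show ?thesis using collapse_min assms by blast
next
  case False then show ?thesis using assms by (simp add: upd_u)
qed

lemma collapse_word_m: assumes "u \<in> P" "nw s u \<subseteq> fst (s u)" "snd (update E u s u) = mn s"
  shows "\<exists>v\<in>nbhd E u. snd (s v) = mn s"
proof -
  have "Min (nw s u) = mn s" using assms by (simp add: upd_u)
  moreover obtain v where "v \<in> nbhd E u" "snd (s v) = Min (nw s u)"
    using Min_nw_in[OF assms(1), of s] unfolding nw_def by (metis imageE)
  ultimately show ?thesis by metis
qed


definition allm :: "config \<Rightarrow> bool" where "allm s \<longleftrightarrow> (\<forall>v\<in>P. snd (s v) = mn s)"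
definition K :: "config \<Rightarrow> nat set" where
  "K s = {v\<in>P. snd (s v) = mn s \<and> (\<exists>w\<in>nbhd E v. snd (s w) = mn s)}"
definition hold :: "config \<Rightarrow> nat set" where "hold s = {v\<in>P. snd (s v) = mn s}"
definition Bd :: "config \<Rightarrow> nat set" where "Bd s = {v\<in>P - K s. \<exists>w\<in>nbhd E v. w \<in> K s}"
definition q :: nat where "q = card W0"
definition tm :: "config \<Rightarrow> nat \<Rightarrow> nat" where "tm s v = q + 1 - card (fst (s v))"
definition SA :: "config \<Rightarrow> nat" where "SA s = (\<Sum>v\<in>hold s. tm s v)"
definition SB :: "config \<Rightarrow> nat" where "SB s = (\<Sum>v\<in>Bd s. tm s v)"
definition cC :: "config \<Rightarrow> nat" where "cC s = card {v\<in>P. fst (s v) \<noteq> {mn s}}"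
definition rr :: "config \<Rightarrow> nat" where "rr s = card {w\<in>W0. mn s < w}"
definition NN :: real where "NN = real (card P)"
definition HQ :: real where "HQ = harm (card P * q)"
definition Hn :: real where "Hn = harm (card P)"

definition Psi :: "config \<Rightarrow> real" where
  "Psi s = (if allm s then NN * harm (cC s)
    else if K s \<noteq> {} then NN * Hn + NN * q * HQ * (real (card (P - K s)) - 1) + NN * q * harm (SB s)
    else NN * Hn + NN * q * HQ * NN + NN * q * HQ * rr s + NN * q * harm (SA s))"

lemma NN_pos: "NN > 0" unfolding NN_def using finP P_ne by (simp add: card_gt_0_iff)

lemma harm_drop: assumes "S' < S" shows "harm S' + 1 / real S \<le> (harm S :: real)"
proof -
  obtain T where T: "S = Suc T" using assms by (cases S) auto
  have "harm S' \<le> (harm T :: real)" using assms T by (intro harm_mono) simp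
  then show ?thesis using T by (simp add: harm_Suc inverse_eq_divide)
qed

lemma harm_ge: assumes "1 \<le> S" shows "1 / real S \<le> (harm S :: real)"
  using harm_drop[of 0 S] assms by (simp add: harm_def)

lemma drift_generic:
  fixes f :: "nat \<Rightarrow> real" and D :: "nat set"
  assumes "D \<subseteq> P" "d > 0" "real (card P) \<le> real (card D) * d"
    "\<And>u. u \<in> P \<Longrightarrow> f u \<le> X" "\<And>u. u \<in> D \<Longrightarrow> f u \<le> X - d"
  shows "real (card P) + (\<Sum>u\<in>P. f u) \<le> real (card P) * X"
proof -
  have finD: "finite D" using assms(1) finP finite_subset by blast
  have "(\<Sum>u\<in>P. f u) = (\<Sum>u\<in>D. f u) + (\<Sum>u\<in>P - D. f u)"
    using assms(1) finP by (metis sum.subset_diff add.commute)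
  also have "\<dots> \<le> (\<Sum>u\<in>D. X - d) + (\<Sum>u\<in>P - D. X)"
    using assms(1,4,5) by (intro add_mono sum_mono) auto
  also have "\<dots> = real (card D) * (X - d) + real (card (P - D)) * X" by simp
  also have "real (card (P - D)) = real (card P) - real (card D)"
    using assms(1) finD by (simp add: card_Diff_subset of_nat_diff card_mono finP)
  finally show ?thesis using assms(3) by (simp add: algebra_simps)
qed

lemma card_fst: assumes "Inv s" "v \<in> P" shows "1 \<le> card (fst (s v))" "card (fst (s v)) \<le> q"
proof -
  have "snd (s v) \<in> fst (s v)" "fst (s v) \<subseteq> W0" using assms unfolding Inv_def by auto
  moreover then have "finite (fst (s v))" using finW finite_subset by blast
  ultimately show "1 \<le> card (fst (s v))" "card (fst (s v)) \<le> q"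
    unfolding q_def by (auto intro: card_mono finW simp: Suc_le_eq card_gt_0_iff)
qed

lemma tm_bounds: assumes "Inv s" "v \<in> P" shows "1 \<le> tm s v" "tm s v \<le> q"
  using card_fst[OF assms] unfolding tm_def by auto

lemma sum_tm_bounds: assumes "Inv s" "T \<subseteq> P"
  shows "card T \<le> (\<Sum>v\<in>T. tm s v)" "(\<Sum>v\<in>T. tm s v) \<le> q * card T"
proof -
  have "(\<Sum>v\<in>T. 1) \<le> (\<Sum>v\<in>T. tm s v)" using tm_bounds assms by (intro sum_mono) auto
  then show "card T \<le> (\<Sum>v\<in>T. tm s v)" by simp
  have "(\<Sum>v\<in>T. tm s v) \<le> (\<Sum>v\<in>T. q)" using tm_bounds assms by (intro sum_mono) auto
  then show "(\<Sum>v\<in>T. tm s v) \<le> q * card T" by (simp add: mult.commute)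
qed

lemma sum_tm_le_nq: assumes "Inv s" "T \<subseteq> P" shows "(\<Sum>v\<in>T. tm s v) \<le> card P * q"
proof -
  have "card T \<le> card P" using assms(2) finP by (rule card_mono[rotated])
  then have "q * card T \<le> card P * q" by (simp add: mult.commute)
  then show ?thesis using sum_tm_bounds(2)[OF assms] by linarith
qed

lemma harm_le_HQ: assumes "Inv s" "T \<subseteq> P" shows "harm (\<Sum>v\<in>T. tm s v) \<le> HQ"
  unfolding HQ_def by (rule harm_mono) (rule sum_tm_le_nq[OF assms])

lemma q_pos: assumes "Inv s" shows "1 \<le> q"
proof -
  obtain v where "v \<in> P" using P_ne by blast
  then show ?thesis using card_fst[OF assms] by (meson le_trans)
qed

lemma Hn_nonneg: "0 \<le> Hn" "0 \<le> HQ" unfolding Hn_def HQ_def by (simp_all add: harm_nonneg)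


lemma stageC:
  assumes I: "Inv s" and A: "allm s" and nf: "\<not> fixed_point P E s"
  shows "NN + (\<Sum>u\<in>P. Psi (update E u s)) \<le> NN * Psi s"
proof -
  define m where "m = mn s"
  define C where "C t = {v\<in>P. fst (t v) \<noteq> {m}}" for t :: config
  have upd: "update E u s = s(u := ({m}, m))" if u: "u \<in> P" for u
  proof -
    have "nw s u = {m}"
    proof -
      have "nw s u \<subseteq> {m}" unfolding nw_def using nbhd_sub A by (auto simp: allm_def m_def)
      then show ?thesis using nw_ne[OF u] by blast
    qed
    moreover have "m \<in> fst (s u)" using I u A unfolding Inv_def allm_def m_def by auto
    ultimately show ?thesis unfolding update_eq by simp
  qed
  have props: "allm (update E u s) \<and> mn (update E u s) = m \<and> C (update E u s) = C s - {u}" if u: "u \<in> P" for u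
  proof -
    have su: "snd (update E u s u) = m" using upd[OF u] by simp
    have mk: "mn (update E u s) = m" using mn_keep[OF u u su[unfolded m_def]] m_def by simp
    have "allm (update E u s)" unfolding allm_def mk using A upd[OF u] by (auto simp: allm_def m_def)
    moreover have "C (update E u s) = C s - {u}" unfolding C_def using upd[OF u] by auto
    ultimately show ?thesis using mk by simp
  qed
  have cCe: "cC t = card (C t)" if "mn t = m" for t unfolding cC_def C_def using that by simp
  have finC: "finite (C s)" unfolding C_def using finP by simp
  have Dne: "C s \<noteq> {}"
  proof
    assume "C s = {}"
    then have "update E u s = s" if "u \<in> P" for u
    proof -
      have "s u = ({m}, m)" using \<open>C s = {}\<close> that A unfolding C_def allm_def m_def
        by (metis (mono_tags, lifting) empty_iff mem_Collect_eq prod.collapse)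
      then show ?thesis using upd[OF that] by (simp add: fun_upd_idem)
    qed
    then show False using nf unfolding fixed_point_def by blast
  qed
  have cpos: "0 < card (C s)" using finC Dne by (simp add: card_gt_0_iff)
  have Ps: "Psi s = NN * harm (card (C s))" unfolding Psi_def using A cCe[of s] m_def by simp
  have Pu: "Psi (update E u s) = NN * harm (card (C s - {u}))" if "u \<in> P" for u
    unfolding Psi_def using props[OF that] cCe by simp
  show ?thesis unfolding NN_def
  proof (rule drift_generic[where D = "C s" and d = "NN / card (C s)"])
    show "C s \<subseteq> P" unfolding C_def by auto
    show "0 < NN / real (card (C s))" using NN_pos cpos by simp
    show "real (card P) \<le> real (card (C s)) * (NN / real (card (C s)))" using cpos NN_def by simp
    fix u assume u: "u \<in> P"
    have "card (C s - {u}) \<le> card (C s)" using finC by (simp add: card_Diff1_le)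
    then have "harm (card (C s - {u})) \<le> (harm (card (C s)) :: real)" by (rule harm_mono)
    then show "Psi (update E u s) \<le> Psi s"
      unfolding Pu[OF u] Ps using NN_pos by (simp add: mult_left_mono)
  next
    fix u assume u: "u \<in> C s"
    have "card (C s - {u}) < card (C s)" using finC u by (rule card_Diff1_less)
    from harm_drop[OF this] have "NN * harm (card (C s - {u})) \<le> NN * (harm (card (C s)) - 1 / real (card (C s)))"
      using NN_pos by (intro mult_left_mono) auto
    moreover have uP: "u \<in> P" using u unfolding C_def by auto
    ultimately show "Psi (update E u s) \<le> Psi s - NN / real (card (C s))"
      using Pu[OF uP] Ps by (simp add: right_diff_distrib)
  qed
qed


lemma cC_le: "cC s \<le> card P" unfolding cC_def using finP by (intro card_mono) auto

lemma Psi_allm_ub: assumes "allm s" shows "Psi s \<le> NN * Hn"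
proof -
  have "harm (cC s) \<le> (harm (card P) :: real)" using cC_le by (rule harm_mono)
  then show ?thesis using assms NN_pos unfolding Psi_def Hn_def by (simp add: mult_left_mono)
qed

lemma Psi_notA_ub: assumes I: "Inv s" and "allm s \<or> K s \<noteq> {}"
  shows "Psi s \<le> NN * Hn + NN * q * HQ * NN"
proof (cases "allm s")
  case True
  have "0 \<le> NN * q * HQ * NN" using NN_pos Hn_nonneg by simp
  then show ?thesis using Psi_allm_ub[OF True] by linarith
next
  case False
  then have Kne: "K s \<noteq> {}" using assms by simp
  have k: "real (card (P - K s)) \<le> NN" unfolding NN_def using finP by (simp add: card_mono)
  have h: "harm (SB s) \<le> HQ" unfolding SB_def by (rule harm_le_HQ[OF I]) (auto simp: Bd_def)
  have c: "0 \<le> NN * q" using NN_pos by simp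
  have "NN * q * HQ * (real (card (P - K s)) - 1) \<le> NN * q * HQ * (NN - 1)"
    using k c Hn_nonneg by (intro mult_left_mono) auto
  moreover have "NN * q * harm (SB s) \<le> NN * q * HQ" using h c by (rule mult_left_mono)
  ultimately have "NN * q * HQ * (real (card (P - K s)) - 1) + NN * q * harm (SB s) \<le> NN * q * HQ * NN"
    by (simp add: algebra_simps)
  then show ?thesis using False Kne unfolding Psi_def by simp
qed

lemma K_sub: "K s \<subseteq> P" unfolding K_def by auto

lemma K_pair: assumes "v \<in> K s" shows "\<exists>w\<in>nbhd E v. w \<in> K s \<and> w \<noteq> v"
proof -
  obtain w where w: "w \<in> nbhd E v" "snd (s w) = mn s" using assms unfolding K_def by auto
  have "w \<in> P" using w nbhd_sub by auto
  moreover have "v \<in> nbhd E w" using w nbhd_sym by simp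
  ultimately have "w \<in> K s" using w assms unfolding K_def by auto
  moreover have "w \<noteq> v" using w nbhd_irr by auto
  ultimately show ?thesis using w by auto
qed

lemma K_keep: assumes "u \<in> P" "v \<in> K s" shows "snd (update E u s v) = mn s"
proof (cases "v = u")
  case True
  obtain w where "w \<in> nbhd E v" "snd (s w) = mn s" using assms unfolding K_def by auto
  then show ?thesis using keep_m[OF assms(1)] True assms(2) unfolding K_def by auto
next
  case False then show ?thesis using assms by (simp add: upd_other K_def)
qed

lemma K_mono: assumes "u \<in> P" "K s \<noteq> {}"
  shows "mn (update E u s) = mn s" "K s \<subseteq> K (update E u s)"
proof -
  obtain v where v: "v \<in> K s" using assms by blast
  show mk: "mn (update E u s) = mn s" using mn_keep[OF assms(1)] K_keep[OF assms(1) v] v K_sub by blast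
  show "K s \<subseteq> K (update E u s)"
  proof
    fix x assume x: "x \<in> K s"
    obtain w where w: "w \<in> nbhd E x" "w \<in> K s" using K_pair[OF x] by blast
    show "x \<in> K (update E u s)" unfolding K_def mk
      using K_keep[OF assms(1) x] K_keep[OF assms(1) w(2)] w x K_sub by blast
  qed
qed

lemma Bd_ne: assumes "K s \<noteq> {}" "\<not> allm s" shows "Bd s \<noteq> {}"
proof -
  obtain a where a: "a \<in> K s" using assms by blast
  obtain b where b: "b \<in> P" "snd (s b) \<noteq> mn s" using assms(2) unfolding allm_def by blast
  then have "b \<notin> K s" unfolding K_def by auto
  then obtain x y where xy: "x \<in> K s" "y \<in> P - K s" "(x, y) \<in> E" using cross_edge[OF K_sub a b(1)] by blast
  then have "x \<in> nbhd E y" using symE unfolding nbhd_def sym_def by auto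
  then have "y \<in> Bd s" using xy unfolding Bd_def by auto
  then show ?thesis by blast
qed

lemma finBd: "finite (Bd s)" unfolding Bd_def using finP by simp
lemma Bd_sub: "Bd s \<subseteq> P" unfolding Bd_def by auto


lemma stageB:
  assumes I: "Inv s" and nA: "\<not> allm s" and Kne: "K s \<noteq> {}"
  shows "NN + (\<Sum>u\<in>P. Psi (update E u s)) \<le> NN * Psi s"
proof -
  define S where "S = SB s"
  define k where "k = card (P - K s)"
  define X where "X = Psi s"
  have X: "X = NN * Hn + NN * q * HQ * (real k - 1) + NN * q * harm S"
    unfolding X_def Psi_def S_def k_def using nA Kne by simp
  have Bne: "Bd s \<noteq> {}" using Bd_ne Kne nA by blast
  have cB: "1 \<le> card (Bd s)" using Bne finBd by (simp add: Suc_le_eq card_gt_0_iff)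
  have S1: "card (Bd s) \<le> S" "S \<le> q * card (Bd s)"
    unfolding S_def SB_def using sum_tm_bounds[OF I Bd_sub] by auto
  have Spos: "1 \<le> S" using S1 cB by linarith
  have qpos: "1 \<le> q" using q_pos[OF I] .
  have k1: "1 \<le> k"
  proof -
    obtain b where b: "b \<in> P" "snd (s b) \<noteq> mn s" using nA unfolding allm_def by blast
    then have "b \<in> P - K s" unfolding K_def by auto
    then have "P - K s \<noteq> {}" by blast
    then show ?thesis unfolding k_def using finP by (simp add: Suc_le_eq card_gt_0_iff)
  qed
  define d where "d = NN * q / S"
  have dpos: "0 < d" unfolding d_def using NN_pos qpos Spos by simp
  have hS: "d \<le> NN * q * harm S"
  proof -
    have "1 / real S \<le> harm S" using harm_ge Spos by simp
    then have "NN * q * (1 / real S) \<le> NN * q * harm S" using NN_pos by (intro mult_left_mono) auto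
    then show ?thesis unfolding d_def by simp
  qed
  have base_le: "NN * Hn + NN * q * HQ * (real k - 1) \<le> X - d" using X hS by simp
  have key: "Psi (update E u s) \<le> X \<and> (u \<in> Bd s \<longrightarrow> Psi (update E u s) \<le> X - d)" if u: "u \<in> P" for u
  proof -
    define s' where "s' = update E u s"
    have I': "Inv s'" unfolding s'_def using Inv_update[OF I u] .
    have mk: "mn s' = mn s" and Km: "K s \<subseteq> K s'" unfolding s'_def using K_mono[OF u Kne] by auto
    have "Psi s' \<le> X - d"
      if c: "allm s' \<or> K s' \<noteq> K s"
    proof (cases "allm s'")
      case True
      have "0 \<le> NN * q * HQ * (real k - 1)" using NN_pos Hn_nonneg k1 by simp
      then show ?thesis using Psi_allm_ub[OF True] base_le by linarith
    next
      case False
      then have Kne': "K s' \<noteq> {}" using Km Kne by blast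
      have "K s \<subset> K s'" using Km c False by blast
      then have "P - K s' \<subset> P - K s" using K_sub[of s'] K_sub[of s] by blast
      then have "card (P - K s') < k" unfolding k_def using finP by (intro psubset_card_mono) auto
      then have kk: "real (card (P - K s')) - 1 \<le> real k - 2" by linarith
      have h: "harm (SB s') \<le> HQ" unfolding SB_def by (rule harm_le_HQ[OF I' Bd_sub])
      have c0: "0 \<le> NN * q * HQ" using NN_pos Hn_nonneg by simp
      have "NN * q * HQ * (real (card (P - K s')) - 1) \<le> NN * q * HQ * (real k - 2)"
        using kk c0 by (rule mult_left_mono)
      moreover have "NN * q * harm (SB s') \<le> NN * q * HQ" using h NN_pos by (intro mult_left_mono) auto
      ultimately have "Psi s' \<le> NN * Hn + NN * q * HQ * (real k - 2) + NN * q * HQ"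
        unfolding Psi_def using False Kne' by simp
      also have "\<dots> = NN * Hn + NN * q * HQ * (real k - 1)" by (simp add: algebra_simps)
      finally show ?thesis using base_le by linarith
    qed
    moreover have "Psi s' \<le> X \<and> (u \<in> Bd s \<longrightarrow> Psi s' \<le> X - d)"
      if c: "\<not> allm s'" "K s' = K s"
    proof -
      have Bd': "Bd s' = Bd s" unfolding Bd_def c(2) ..
      have Pe: "Psi s' = NN * Hn + NN * q * HQ * (real k - 1) + NN * q * harm (SB s')"
        unfolding Psi_def k_def using c Kne by simp
      show ?thesis
      proof (cases "u \<in> Bd s")
        case False
        have "SB s' = S" unfolding SB_def S_def Bd'
        proof (rule sum.cong[OF refl])
          fix x assume "x \<in> Bd s"
          then have "x \<noteq> u" using False by blast
          then show "tm s' x = tm s x" unfolding s'_def tm_def by (simp add: upd_other)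
        qed
        then show ?thesis using Pe X False by simp
      next
        case True
        have uK: "u \<notin> K s" using True unfolding Bd_def by auto
        obtain w where w: "w \<in> nbhd E u" "w \<in> K s" using True unfolding Bd_def by auto
        have wm: "snd (s w) = mn s" using w unfolding K_def by auto
        have ncol: "\<not> nw s u \<subseteq> fst (s u)"
        proof
          assume col: "nw s u \<subseteq> fst (s u)"
          have "snd (s' u) = mn s'" using collapse_min[OF u col w(1) wm] mk unfolding s'_def by simp
          moreover have "snd (s' w) = mn s'" using K_keep[OF u w(2)] mk unfolding s'_def by simp
          ultimately have "u \<in> K s'" unfolding K_def using u w(1) by auto
          then show False using uK c(2) by simp
        qed
        have fe: "fst (s' u) = fst (s u) \<union> nw s u" unfolding s'_def using ncol by (simp add: upd_u)
        have fin': "finite (fst (s' u))" using I' u finW finite_subset unfolding Inv_def by blast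
        have "fst (s u) \<subset> fst (s' u)" using fe ncol by blast
        then have "card (fst (s u)) < card (fst (s' u))" using fin' psubset_card_mono by blast
        moreover have "card (fst (s' u)) \<le> q" using card_fst(2)[OF I' u] .
        ultimately have tlt: "tm s' u < tm s u" unfolding tm_def by linarith
        have "SB s' < S" unfolding SB_def S_def Bd'
        proof (rule sum_strict_mono_ex1[OF finBd])
          show "\<forall>x\<in>Bd s. tm s' x \<le> tm s x"
          proof
            fix x assume "x \<in> Bd s"
            show "tm s' x \<le> tm s x"
            proof (cases "x = u")
              case True then show ?thesis using tlt by simp
            next
              case False then show ?thesis unfolding s'_def tm_def by (simp add: upd_other)
            qed
          qed
          show "\<exists>a\<in>Bd s. tm s' a < tm s a" using tlt True by blast
        qed
        from harm_drop[OF this] have "NN * q * harm (SB s') \<le> NN * q * (harm S - 1 / real S)"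
          using NN_pos by (intro mult_left_mono) auto
        then have "Psi s' \<le> X - d" using Pe X unfolding d_def by (simp add: algebra_simps)
        then show ?thesis using dpos True by simp
      qed
    qed
    ultimately have "Psi s' \<le> X \<and> (u \<in> Bd s \<longrightarrow> Psi s' \<le> X - d)"
      using dpos by (cases "allm s' \<or> K s' \<noteq> K s") auto
    then show ?thesis unfolding s'_def .
  qed
  show ?thesis unfolding X_def[symmetric]
  proof -
    have "real (card P) \<le> real (card (Bd s)) * d"
    proof -
      have "real S \<le> real q * real (card (Bd s))" using S1(2) by (metis of_nat_le_iff of_nat_mult)
      then have "NN * real S \<le> NN * (real q * real (card (Bd s)))" using NN_pos by (intro mult_left_mono) auto
      then have "NN \<le> NN * q * card (Bd s) / S" using Spos by (simp add: field_simps)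
      then show ?thesis unfolding d_def NN_def by (simp add: algebra_simps)
    qed
    then show "NN + (\<Sum>u\<in>P. Psi (update E u s)) \<le> NN * X"
      unfolding NN_def
    proof (rule drift_generic[OF Bd_sub dpos])
      show "\<And>u. u \<in> P \<Longrightarrow> Psi (update E u s) \<le> X" using key by blast
      show "\<And>u. u \<in> Bd s \<Longrightarrow> Psi (update E u s) \<le> X - d" using key Bd_sub by blast
    qed
  qed
qed


lemma fin_hold: "finite (hold s)" unfolding hold_def using finP by simp
lemma hold_sub: "hold s \<subseteq> P" unfolding hold_def by auto

lemma stageA:
  assumes I: "Inv s" and nA: "\<not> allm s" and Ke: "K s = {}"
  shows "NN + (\<Sum>u\<in>P. Psi (update E u s)) \<le> NN * Psi s"
proof -
  define m where "m = mn s"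
  define S where "S = SA s"
  define X where "X = Psi s"
  define base where "base = NN * Hn + NN * q * HQ * NN + NN * q * HQ * rr s"
  have X: "X = base + NN * q * harm S"
    unfolding X_def Psi_def S_def base_def using nA Ke by simp
  have hne: "hold s \<noteq> {}" using mn_in[of s] unfolding hold_def by auto
  have ch: "1 \<le> card (hold s)" using hne fin_hold by (simp add: Suc_le_eq card_gt_0_iff)
  have S1: "card (hold s) \<le> S" "S \<le> q * card (hold s)"
    unfolding S_def SA_def using sum_tm_bounds[OF I hold_sub] by auto
  have Spos: "1 \<le> S" using S1 ch by linarith
  have qpos: "1 \<le> q" using q_pos[OF I] .
  define d where "d = NN * q / S"
  have dpos: "0 < d" unfolding d_def using NN_pos qpos Spos by simp
  have hS: "d \<le> NN * q * harm S"
  proof -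
    have "1 / real S \<le> harm S" using harm_ge Spos by simp
    then have "NN * q * (1 / real S) \<le> NN * q * harm S" using NN_pos by (intro mult_left_mono) auto
    then show ?thesis unfolding d_def by simp
  qed
  have base_le: "base \<le> X - d" using X hS by simp
  have c0: "0 \<le> NN * q * HQ" using NN_pos Hn_nonneg by simp
  have key: "Psi (update E u s) \<le> X \<and> (u \<in> hold s \<longrightarrow> Psi (update E u s) \<le> X - d)" if u: "u \<in> P" for u
  proof -
    define s' where "s' = update E u s"
    have I': "Inv s'" unfolding s'_def using Inv_update[OF I u] .
    have mm: "m \<le> mn s'" unfolding s'_def m_def using mn_mono[OF u] .
    have "Psi s' \<le> X - d" if c: "allm s' \<or> K s' \<noteq> {}"
    proof -
      have "Psi s' \<le> NN * Hn + NN * q * HQ * NN" using Psi_notA_ub[OF I' c] .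
      moreover have "0 \<le> NN * q * HQ * rr s" using c0 by simp
      ultimately show ?thesis using base_le unfolding base_def by linarith
    qed
    moreover have "Psi s' \<le> X - d" if c: "\<not> allm s'" "K s' = {}" "mn s' \<noteq> m"
    proof -
      have lt: "m < mn s'" using mm c(3) by simp
      obtain v where v: "v \<in> P" "snd (s' v) = mn s'" using mn_in by blast
      have inW: "mn s' \<in> W0" using I' v unfolding Inv_def by force
      have "{w\<in>W0. mn s' < w} \<subset> {w\<in>W0. m < w}" using lt inW by auto
      then have "rr s' < rr s" unfolding rr_def m_def using finW by (intro psubset_card_mono) auto
      then have rr1: "real (rr s') \<le> real (rr s) - 1" by linarith
      have h: "harm (SA s') \<le> HQ" unfolding SA_def by (rule harm_le_HQ[OF I' hold_sub])
      have "NN * q * HQ * rr s' \<le> NN * q * HQ * (real (rr s) - 1)" using rr1 c0 by (rule mult_left_mono)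
      moreover have "NN * q * harm (SA s') \<le> NN * q * HQ" using h NN_pos by (intro mult_left_mono) auto
      ultimately have "Psi s' \<le> NN * Hn + NN * q * HQ * NN + NN * q * HQ * (real (rr s) - 1) + NN * q * HQ"
        unfolding Psi_def using c by simp
      also have "\<dots> = base" unfolding base_def by (simp add: algebra_simps)
      finally show ?thesis using base_le by linarith
    qed
    moreover have "Psi s' \<le> X \<and> (u \<in> hold s \<longrightarrow> Psi s' \<le> X - d)"
      if c: "\<not> allm s'" "K s' = {}" "mn s' = m"
    proof -
      have Pe: "Psi s' = base + NN * q * harm (SA s')"
        unfolding Psi_def base_def rr_def using c m_def by simp
      have oth: "s' v = s v" if "v \<noteq> u" for v unfolding s'_def using that by (simp add: upd_other)
      have hsub: "hold s' \<subseteq> hold s"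
      proof
        fix v assume v: "v \<in> hold s'"
        show "v \<in> hold s"
        proof (cases "v = u")
          case False then show ?thesis using v oth c(3) m_def unfolding hold_def by auto
        next
          case True
          show ?thesis
          proof (rule ccontr)
            assume nh: "v \<notin> hold s"
            have s'u: "snd (s' u) = mn s" using v True c(3) m_def unfolding hold_def by auto
            have col: "nw s u \<subseteq> fst (s u)"
            proof (rule ccontr)
              assume "\<not> nw s u \<subseteq> fst (s u)"
              then have "snd (s' u) = snd (s u)" unfolding s'_def by (simp add: upd_u)
              then show False using nh True s'u u unfolding hold_def by auto
            qed
            obtain w where w: "w \<in> nbhd E u" "snd (s w) = mn s"
              using collapse_word_m[OF u col s'u[unfolded s'_def]] by blast
            have "w \<noteq> u" using w nbhd_irr by auto
            then have "snd (s' w) = mn s'" using w oth c(3) m_def by simp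
            then have "u \<in> K s'" unfolding K_def using u w(1) s'u c(3) m_def by auto
            then show False using c(2) by simp
          qed
        qed
      qed
      show ?thesis
      proof (cases "u \<in> hold s")
        case False
        have "hold s \<subseteq> hold s'"
        proof
          fix v assume v: "v \<in> hold s"
          then have "v \<noteq> u" using False by blast
          then show "v \<in> hold s'" using v oth c(3) m_def unfolding hold_def by auto
        qed
        then have he: "hold s' = hold s" using hsub by blast
        have "SA s' = S" unfolding SA_def S_def he
        proof (rule sum.cong[OF refl])
          fix x assume "x \<in> hold s"
          then have "x \<noteq> u" using False by blast
          then show "tm s' x = tm s x" unfolding tm_def using oth by simp
        qed
        then show ?thesis using Pe X False by simp
      next
        case True
        have "SA s' < S"
        proof (cases "u \<in> hold s'")
          case uh: True
          have su: "snd (s' u) = mn s" using uh c(3) m_def unfolding hold_def by auto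
          have ncol: "\<not> nw s u \<subseteq> fst (s u)"
          proof
            assume col: "nw s u \<subseteq> fst (s u)"
            obtain w where w: "w \<in> nbhd E u" "snd (s w) = mn s"
              using collapse_word_m[OF u col su[unfolded s'_def]] by blast
            then have "u \<in> K s" unfolding K_def using u True unfolding hold_def by auto
            then show False using Ke by simp
          qed
          have he: "hold s' = hold s"
          proof
            show "hold s \<subseteq> hold s'"
            proof
              fix v assume v: "v \<in> hold s"
              show "v \<in> hold s'"
              proof (cases "v = u")
                case True then show ?thesis using uh by simp
              next
                case False then show ?thesis using v oth c(3) m_def unfolding hold_def by auto
              qed
            qed
          qed (rule hsub)
          have fe: "fst (s' u) = fst (s u) \<union> nw s u" unfolding s'_def using ncol by (simp add: upd_u)
          have fin': "finite (fst (s' u))" using I' u finW finite_subset unfolding Inv_def by blast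
          have "fst (s u) \<subset> fst (s' u)" using fe ncol by blast
          then have "card (fst (s u)) < card (fst (s' u))" using fin' psubset_card_mono by blast
          moreover have "card (fst (s' u)) \<le> q" using card_fst(2)[OF I' u] .
          ultimately have tlt: "tm s' u < tm s u" unfolding tm_def by linarith
          show ?thesis unfolding SA_def S_def he
          proof (rule sum_strict_mono_ex1[OF fin_hold])
            show "\<forall>x\<in>hold s. tm s' x \<le> tm s x"
            proof
              fix x assume "x \<in> hold s"
              show "tm s' x \<le> tm s x"
              proof (cases "x = u")
                case True then show ?thesis using tlt by simp
              next
                case False then show ?thesis unfolding tm_def using oth by simp
              qed
            qed
            show "\<exists>a\<in>hold s. tm s' a < tm s a" using tlt True by blast
          qed
        next
          case nuh: False
          have hs: "hold s' \<subseteq> hold s - {u}" using hsub nuh by blast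
          have "SA s' = (\<Sum>v\<in>hold s'. tm s v)" unfolding SA_def
          proof (rule sum.cong[OF refl])
            fix x assume "x \<in> hold s'"
            then have "x \<noteq> u" using nuh by blast
            then show "tm s' x = tm s x" unfolding tm_def using oth by simp
          qed
          also have "\<dots> \<le> (\<Sum>v\<in>hold s - {u}. tm s v)"
            using hs fin_hold by (intro sum_mono2) auto
          also have "\<dots> < (\<Sum>v\<in>hold s. tm s v)"
          proof -
            have "(\<Sum>v\<in>hold s. tm s v) = tm s u + (\<Sum>v\<in>hold s - {u}. tm s v)"
              using True fin_hold by (simp add: sum.remove)
            moreover have "1 \<le> tm s u" using tm_bounds(1)[OF I u] .
            ultimately show ?thesis by linarith
          qed
          finally show ?thesis unfolding S_def SA_def .
        qed
        from harm_drop[OF this] have "NN * q * harm (SA s') \<le> NN * q * (harm S - 1 / real S)"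
          using NN_pos by (intro mult_left_mono) auto
        then have "Psi s' \<le> X - d" using Pe X unfolding d_def by (simp add: algebra_simps)
        then show ?thesis using dpos True by simp
      qed
    qed
    ultimately have "Psi s' \<le> X \<and> (u \<in> hold s \<longrightarrow> Psi s' \<le> X - d)"
      using dpos by (cases "allm s' \<or> K s' \<noteq> {}"; cases "mn s' = m") auto
    then show ?thesis unfolding s'_def .
  qed
  have "real (card P) \<le> real (card (hold s)) * d"
  proof -
    have "real S \<le> real q * real (card (hold s))" using S1(2) by (metis of_nat_le_iff of_nat_mult)
    then have "NN * real S \<le> NN * (real q * real (card (hold s)))" using NN_pos by (intro mult_left_mono) auto
    then have "NN \<le> NN * q * card (hold s) / S" using Spos by (simp add: field_simps)
    then show ?thesis unfolding d_def NN_def by (simp add: algebra_simps)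
  qed
  then show ?thesis unfolding X_def[symmetric] NN_def
  proof (rule drift_generic[OF hold_sub dpos])
    show "\<And>u. u \<in> P \<Longrightarrow> Psi (update E u s) \<le> X" using key by blast
    show "\<And>u. u \<in> hold s \<Longrightarrow> Psi (update E u s) \<le> X - d" using key hold_sub by blast
  qed
qed


lemma drift_all:
  assumes "Inv s" "\<not> fixed_point P E s"
  shows "real (card P) + (\<Sum>u\<in>P. Psi (update E u s)) \<le> real (card P) * Psi s"
proof (cases "allm s")
  case True then show ?thesis using stageC[OF assms(1) True assms(2)] unfolding NN_def by blast
next
  case False
  then show ?thesis using stageA[OF assms(1) False] stageB[OF assms(1) False] unfolding NN_def by blast
qed

lemma Psi_nonneg: assumes I: "Inv s" shows "0 \<le> Psi s"
proof -
  have a: "0 \<le> NN" using NN_pos by simp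
  have c0: "0 \<le> NN * q * HQ" using NN_pos Hn_nonneg by simp
  show ?thesis
  proof (cases "allm s")
    case True then show ?thesis unfolding Psi_def using a by (simp add: harm_nonneg)
  next
    case nA: False
    show ?thesis
    proof (cases "K s = {}")
      case False
      obtain b where b: "b \<in> P" "snd (s b) \<noteq> mn s" using nA unfolding allm_def by blast
      then have "b \<in> P - K s" unfolding K_def by auto
      then have "P - K s \<noteq> {}" by blast
      then have "1 \<le> card (P - K s)" using finP by (simp add: Suc_le_eq card_gt_0_iff)
      then have "0 \<le> NN * q * HQ * (real (card (P - K s)) - 1)" using c0 by simp
      moreover have "0 \<le> NN * Hn" "0 \<le> NN * q * harm (SB s)" using a Hn_nonneg by (simp_all add: harm_nonneg)
      ultimately show ?thesis unfolding Psi_def using nA False by simp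
    next
      case True
      have "0 \<le> NN * Hn" "0 \<le> NN * q * harm (SA s)" "0 \<le> NN * q * HQ * NN" "0 \<le> NN * q * HQ * rr s"
        using a c0 Hn_nonneg by (simp_all add: harm_nonneg)
      then show ?thesis unfolding Psi_def using nA True by simp
    qed
  qed
qed

lemma rr_le: "rr s \<le> q" unfolding rr_def q_def using finW by (intro card_mono) auto

lemma Psi_ub: assumes I: "Inv s" shows "Psi s \<le> NN * Hn + NN * q * HQ * (NN + q + 1)"
proof (cases "allm s \<or> K s \<noteq> {}")
  case True
  have "Psi s \<le> NN * Hn + NN * q * HQ * NN" using Psi_notA_ub[OF I True] .
  moreover have "NN * q * HQ * NN \<le> NN * q * HQ * (NN + q + 1)"
    using NN_pos Hn_nonneg by (intro mult_left_mono) auto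
  ultimately show ?thesis by linarith
next
  case False
  have b: "0 \<le> NN * q * HQ" using NN_pos Hn_nonneg by simp
  have "NN * q * HQ * rr s \<le> NN * q * HQ * q" using b rr_le by (intro mult_left_mono) auto
  moreover have "NN * q * harm (SA s) \<le> NN * q * HQ"
    using harm_le_HQ[OF I hold_sub] NN_pos unfolding SA_def by (intro mult_left_mono) auto
  ultimately have "Psi s \<le> NN * Hn + NN * q * HQ * NN + NN * q * HQ * q + NN * q * HQ"
    unfolding Psi_def using False by simp
  then show ?thesis by (simp add: algebra_simps)
qed

end


lemma harm_le_ln: assumes "1 \<le> k" shows "(harm k :: real) \<le> ln (real k) + 1"
proof -
  have "harm k - ln (real k) \<le> harm 1 - ln (real 1 :: real)"
    using euler_mascheroni_sequence_decreasing[of 1 k] assms by simp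
  then show ?thesis by (simp add: harm_def)
qed

lemma final_arith:
  fixes n q p :: nat and Hn HQ :: real
  assumes n2: "2 \<le> n" and q1: "1 \<le> q" and qn: "q \<le> n" and qp: "q \<le> p"
    and hn: "Hn \<le> ln n + 1" and hq: "HQ \<le> 2 * ln n + 1" and hn0: "0 \<le> Hn" and hq0: "0 \<le> HQ"
  shows "real n * Hn + real n * q * HQ * (real n + q + 1) \<le> 15 * real n ^ 2 * real p * ln (real n)"
proof -
  define L where "L = ln (real n)"
  have L: "2/3 \<le> L"
  proof -
    have "ln (2::real) \<le> ln (real n)" using n2 by simp
    then show ?thesis unfolding L_def using ln2_ge_two_thirds by linarith
  qed
  have hn': "Hn \<le> 3 * L" using hn L unfolding L_def by linarith
  have hq': "HQ \<le> 4 * L" using hq L unfolding L_def by linarith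
  have nq: "real n + q + 1 \<le> 3 * real n" using qn n2 by simp
  have n0: "0 \<le> real n" by simp
  have "real n * Hn \<le> real n * (3 * L)" using hn' n0 by (rule mult_left_mono)
  also have "\<dots> \<le> real n * (3 * L) * (real n * q)"
  proof -
    have "1 \<le> real n * real q" using n2 q1 by (metis mult_le_mono of_nat_1 of_nat_le_iff of_nat_mult one_le_numeral le_trans nat_mult_1)
    moreover have "0 \<le> real n * (3 * L)" using L by simp
    ultimately show ?thesis by (metis mult.right_neutral mult_left_mono)
  qed
  finally have t1: "real n * Hn \<le> 3 * L * real n ^ 2 * q" by (simp add: power2_eq_square algebra_simps)
  have "real n * q * HQ * (real n + q + 1) \<le> real n * q * (4 * L) * (3 * real n)"
    using hq' nq hq0 L by (intro mult_mono) auto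
  then have t2: "real n * q * HQ * (real n + q + 1) \<le> 12 * L * real n ^ 2 * q"
    by (simp add: power2_eq_square algebra_simps)
  have "3 * L * real n ^ 2 * q + 12 * L * real n ^ 2 * q = 15 * real n ^ 2 * q * L" by (simp add: algebra_simps)
  also have "\<dots> \<le> 15 * real n ^ 2 * p * L" using qp L by (intro mult_right_mono mult_left_mono) auto
  finally show ?thesis using t1 t2 unfolding L_def by linarith
qed


theorem theorem1:
  shows "\<exists>C::real. \<forall>(n::nat) (E::(nat \<times> nat) set) (W::nat set) (c0::config).
           n \<ge> 2 \<longrightarrow> simple_connected_graph {1..n} E \<longrightarrow> finite W \<longrightarrow>
           (\<forall>u\<in>{1..n}. snd (c0 u) \<in> W \<and> fst (c0 u) = {snd (c0 u)}) \<longrightarrow>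
           expected_hit_time {1..n} E c0
             \<le> ennreal (C * real n ^ 2 * real (card W) * ln (real n))"
proof (intro exI[of _ 15] allI impI)
  fix n :: nat and E :: "(nat \<times> nat) set" and W :: "nat set" and c0 :: config
  assume n2: "n \<ge> 2" and sc: "simple_connected_graph {1..n} E" and fW: "finite W"
    and init: "\<forall>u\<in>{1..n}. snd (c0 u) \<in> W \<and> fst (c0 u) = {snd (c0 u)}"
  define P where "P = {1..n}"
  define W0 where "W0 = (\<lambda>u. snd (c0 u)) ` P"
  have cP: "card P = n" unfolding P_def by simp
  interpret N: net P E W0
  proof
    show "finite P" unfolding P_def by simp
    show "2 \<le> card P" using cP n2 by simp
    show "E \<subseteq> P \<times> P" "sym E" "irrefl E" "\<forall>u\<in>P. \<forall>v\<in>P. (u, v) \<in> E\<^sup>*"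
      using sc unfolding simple_connected_graph_def P_def by auto
    show "finite W0" unfolding W0_def P_def by simp
  qed
  have I0: "N.Inv c0" unfolding N.Inv_def
  proof
    fix u assume "u \<in> P"
    then show "snd (c0 u) \<in> fst (c0 u) \<and> fst (c0 u) \<subseteq> W0" using init unfolding P_def W0_def by auto
  qed
  have "expected_hit_time P E c0 \<le> ennreal (N.Psi c0)"
    by (rule expected_bound[OF N.finP N.P_ne I0 N.Inv_update N.Psi_nonneg N.drift_all])
  also have "N.Psi c0 \<le> 15 * real n ^ 2 * real (card W) * ln (real n)"
  proof -
    have ub: "N.Psi c0 \<le> N.NN * N.Hn + N.NN * N.q * N.HQ * (N.NN + N.q + 1)" by (rule N.Psi_ub[OF I0])
    have q1: "1 \<le> N.q" using N.q_pos[OF I0] .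
    have "card W0 \<le> card P" unfolding W0_def by (rule card_image_le[OF N.finP])
    then have qn: "N.q \<le> n" unfolding N.q_def cP .
    have "W0 \<subseteq> W" unfolding W0_def using init P_def by auto
    then have qp: "N.q \<le> card W" unfolding N.q_def using fW by (intro card_mono)
    have hn: "N.Hn \<le> ln (real n) + 1" unfolding N.Hn_def cP using harm_le_ln n2 by simp
    have "N.HQ \<le> harm (n * n)" unfolding N.HQ_def cP using qn by (intro harm_mono) simp
    also have "\<dots> \<le> ln (real (n * n)) + 1" using n2 by (intro harm_le_ln) (simp add: Suc_le_eq)
    also have "ln (real (n * n)) = 2 * ln (real n)" using n2 by (simp add: ln_mult)
    finally have hq: "N.HQ \<le> 2 * ln (real n) + 1" .
    have "N.NN * N.Hn + N.NN * N.q * N.HQ * (N.NN + N.q + 1) \<le> 15 * real n ^ 2 * real (card W) * ln (real n)"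
      unfolding N.NN_def cP using final_arith[OF n2 q1 qn qp hn hq N.Hn_nonneg] by simp
    then show ?thesis using ub by linarith
  qed
  finally show "expected_hit_time {1..n} E c0 \<le> ennreal (15 * real n ^ 2 * real (card W) * ln (real n))"
    unfolding P_def by (simp add: ennreal_leI)
qed


end
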